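(* Let $q(m,n)=am^2+bmn+cn^2$ with $a,b,c\in\mathbb{Z}$ be an indefinite form whose discriminant $\Delta=b^2-4ac>0$ is not a perfect square, and let $\lambda>0$. For $k\in\mathbb{Z}$ let $A_k=\{(m,n)\in(\mathbb{Z}\setminus\{0\})\times\mathbb{Z}: q(m,n)=k\}$. Then there is a constant $C_\lambda$ depending only on $\lambda$ such that for every $k\in\mathbb{Z}$, $$\sum_{(m,n)\in A_k}\frac{1}{|m|^{\lambda}}\le C_{\lambda}\,\Delta^{(1+\lambda)/2}.$$ *)

theory Defs
  imports "HOL-Analysis.Analysis"
begin

end

theory Submission
  imports Defs "HOL-Computational_Algebra.Primes"
begin

definition dc :: "nat \<Rightarrow> nat" where "dc n = card {d. d dvd n}"

lemma dc_pp:
  fixes p y :: nat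
  assumes p: "prime p" and np: "\<not> p dvd y" and y: "y > 0"
  shows "dc (p^a * y) = (a+1) * dc y"
proof -
  have fy: "finite {e. e dvd y}" using y by simp
  have eq: "{d. d dvd p^a * y} = (\<lambda>(i,e). p^i * e) ` ({..a} \<times> {e. e dvd y})"
  proof (rule set_eqI, rule iffI)
    fix d assume "d \<in> {d. d dvd p^a * y}"
    then have "d dvd p^a * y" by simp
    then obtain x z where "d = x * z" "x dvd p^a" "z dvd y" by (rule dvd_productE)
    then obtain i where "i \<le> a" "x = p^i" using divides_primepow_nat[OF p] by auto
    then show "d \<in> (\<lambda>(i,e). p^i * e) ` ({..a} \<times> {e. e dvd y})"
      using \<open>d = x*z\<close> \<open>z dvd y\<close> by force
  next
    fix d assume "d \<in> (\<lambda>(i,e). p^i * e) ` ({..a} \<times> {e. e dvd y})"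
    then obtain i e where "i \<le> a" "e dvd y" "d = p^i * e" by auto
    then show "d \<in> {d. d dvd p^a * y}" by (simp add: le_imp_power_dvd mult_dvd_mono)
  qed
  have inj: "inj_on (\<lambda>(i,e). p^i * e) ({..a} \<times> {e. e dvd y})"
  proof (rule inj_onI, clarify)
    fix i e j f assume h: "i \<le> a" "e dvd y" "j \<le> a" "f dvd y" "p^i * e = p^j * f"
    have pe: "\<not> p dvd e" "\<not> p dvd f" using h np dvd_trans by blast+
    have p0: "p > 0" using p prime_gt_0_nat by blast
    have "i = j"
    proof (rule ccontr)
      assume "i \<noteq> j"
      then consider "i < j" | "j < i" by linarith
      then show False
      proof cases
        case 1
        then have "p^j = p^i * p^(j-i)" by (simp add: power_add[symmetric])
        then have "e = p^(j-i) * f" using h(5) p0 by simp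
        then have "p dvd e" using 1 by (simp add: dvd_mult2)
        then show False using pe by simp
      next
        case 2
        then have "p^i = p^j * p^(i-j)" by (simp add: power_add[symmetric])
        then have "f = p^(i-j) * e" using h(5) p0 by simp
        then have "p dvd f" using 2 by (simp add: dvd_mult2)
        then show False using pe by simp
      qed
    qed
    then show "i = j \<and> e = f" using h(5) p0 by simp
  qed
  have "dc (p^a*y) = card ({..a} \<times> {e. e dvd y})"
    unfolding dc_def eq using card_image[OF inj] by simp
  also have "\<dots> = (a+1) * dc y" by (simp add: card_cartesian_product dc_def)
  finally show ?thesis .
qed

lemma aux_lin:
  fixes eps :: real and a :: nat
  assumes e: "eps > 0"
  shows "real (a+1) \<le> (1 + 1/(eps*ln 2)) * 2 powr (a*eps)"
proof -
  define L where "L = eps * ln 2"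
  have L: "L > 0" using e by (simp add: L_def)
  have "2 powr (a*eps) = exp (a * L)" by (simp add: powr_def L_def algebra_simps)
  also have "\<dots> \<ge> 1 + a*L" using exp_ge_add_one_self by blast
  finally have g: "2 powr (a*eps) \<ge> 1 + a*L" .
  have "(1 + 1/L) * (1 + a*L) = 1 + a*L + 1/L + a" using L by (simp add: field_simps)
  also have "\<dots> \<ge> real (a+1)" using L by simp
  finally have "real (a+1) \<le> (1+1/L)*(1+a*L)" .
  also have "\<dots> \<le> (1+1/L) * 2 powr (a*eps)"
    using g L by (intro mult_left_mono) (auto simp: add_pos_pos)
  finally show ?thesis by (simp add: L_def)
qed

lemma aux_big:
  fixes eps :: real and a p :: nat
  assumes e: "eps > 0" and p2: "real p powr eps \<ge> 2"
  shows "real (a+1) \<le> real p powr (a*eps)"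
proof -
  have "real (a+1) \<le> 2^a" 
    by (induction a) auto
  also have "\<dots> \<le> (real p powr eps)^a" using p2 by (intro power_mono) auto
  also have "\<dots> = (real p powr eps) powr a" proof -
    have "p \<noteq> 0" proof assume "p = 0" then show False using p2 by simp qed
    then show ?thesis by (subst powr_realpow) auto
  qed
  also have "\<dots> = real p powr (a*eps)" by (simp add: powr_powr mult.commute)
  finally show ?thesis .
qed

lemma dc_bound_aux:
  fixes eps :: real
  assumes e: "eps > 0"
  defines "B \<equiv> 1 + 1/(eps*ln 2)"
  shows "n > 0 \<Longrightarrow> real (dc n) \<le> real n powr eps * B ^ card {p. prime p \<and> p dvd n \<and> real p powr eps < 2}"
proof (induction n rule: less_induct)
  case (less n)
  have B1: "B \<ge> 1" using e by (simp add: B_def)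
  define S where "S = (\<lambda>n::nat. {p. prime p \<and> p dvd n \<and> real p powr eps < 2})"
  show ?case
  proof (cases "n = 1")
    case True
    then show ?thesis using B1 by (simp add: dc_def)
  next
    case False
    then obtain p where p: "prime p" "p dvd n" using prime_factor_nat by blast
    obtain y where y: "n = p ^ multiplicity p n * y" "\<not> p dvd y"
      by (rule multiplicity_decompose'[of n p]) (use less.prems p(1) not_prime_unit in auto)
    define a where "a = multiplicity p n"
    have n0: "n > 0" using less by simp
    have a1: "a \<ge> 1" unfolding a_def using p n0
      using prime_multiplicity_gt_zero_iff[of p n] by (simp add: Suc_le_eq)
    have p2: "p \<ge> 2" using p prime_ge_2_nat by blast
    have y0: "y > 0" using y n0 by (metis gr0I mult_0_right)
    have "p^a \<ge> p^1" using a1 p2 by (intro power_increasing) auto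
    then have "p^a > 1" using p2 by simp
    then have "y * 1 < y * p^a" using y0 by (intro mult_strict_left_mono) auto
    then have yn: "y < n" using y unfolding a_def[symmetric] by (simp add: mult.commute)
    have IH: "real (dc y) \<le> real y powr eps * B ^ card (S y)" using less.IH[OF yn y0] by (simp add: S_def)
    have dcn: "dc n = (a+1) * dc y" using dc_pp[OF p(1) y(2) y0, of a] y(1) unfolding a_def by metis
    have fin: "finite (S n)" unfolding S_def using n0 by (auto intro: finite_subset[of _ "{..n}"] dest: dvd_imp_le)
    have ydn: "y dvd n" using y(1) by (metis dvd_triv_right)
    have sub: "S y \<subseteq> S n" unfolding S_def using ydn dvd_trans by blast
    have pny: "p \<notin> S y" unfolding S_def using y by auto
    have pw: "real n powr eps = real p powr (a*eps) * real y powr eps"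
    proof -
      have "real n = real p ^ a * real y" using y unfolding a_def[symmetric] by simp
      then have "real n powr eps = (real p ^ a) powr eps * real y powr eps" by (simp add: powr_mult)
      also have "(real p ^ a) powr eps = (real p powr a) powr eps" using p2 by (subst powr_realpow) auto
      also have "\<dots> = real p powr (a*eps)" by (simp add: powr_powr)
      finally show ?thesis .
    qed
    show ?thesis
    proof (cases "real p powr eps < 2")
      case True
      have "insert p (S y) \<subseteq> S n" using sub p True unfolding S_def by auto
      then have "card (insert p (S y)) \<le> card (S n)" using fin card_mono by blast
      then have cs: "card (S y) + 1 \<le> card (S n)" using pny fin sub by (simp add: finite_subset)
      have "real (dc n) = real (a+1) * real (dc y)" using dcn by (simp add: algebra_simps)
      also have "\<dots> \<le> (B * 2 powr (a*eps)) * (real y powr eps * B ^ card (S y))"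
        using aux_lin[OF e, of a] IH unfolding B_def by (intro mult_mono) auto
      also have "\<dots> \<le> (B * real p powr (a*eps)) * (real y powr eps * B ^ card (S y))"
        using p2 B1 e by (intro mult_right_mono mult_left_mono powr_mono2) auto
      also have "\<dots> = real n powr eps * B ^ (card (S y) + 1)" using pw by simp
      also have "\<dots> \<le> real n powr eps * B ^ card (S n)"
        using B1 cs by (intro mult_left_mono power_increasing) auto
      finally show ?thesis by (simp add: S_def)
    next
      case False
      have "real (dc n) = real (a+1) * real (dc y)" using dcn by (simp add: algebra_simps)
      also have "\<dots> \<le> real p powr (a*eps) * (real y powr eps * B ^ card (S y))"
        using aux_big[OF e, of p a] False IH by (intro mult_mono) auto
      also have "\<dots> = real n powr eps * B ^ card (S y)" using pw by simp
      also have "\<dots> \<le> real n powr eps * B ^ card (S n)"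
        using B1 sub fin by (intro mult_left_mono power_increasing card_mono) auto
      finally show ?thesis by (simp add: S_def)
    qed
  qed
qed

lemma dc_bound:
  fixes eps :: real
  assumes e: "eps > 0"
  shows "\<exists>C. \<forall>n>0. real (dc n) \<le> C * real n powr eps"
proof -
  define B where "B = 1 + 1/(eps*ln 2)"
  define N where "N = nat \<lceil>2 powr (1/eps)\<rceil>"
  have B1: "B \<ge> 1" using e by (simp add: B_def)
  have "real (dc n) \<le> B ^ Suc N * real n powr eps" if n: "n > 0" for n
  proof -
    have sub: "{p. prime p \<and> p dvd n \<and> real p powr eps < 2} \<subseteq> {..N}"
    proof
      fix p assume "p \<in> {p. prime p \<and> p dvd n \<and> real p powr eps < 2}"
      then have pp: "prime p" "real p powr eps < 2" by auto
      have p0: "real p > 0" using pp prime_gt_0_nat by simp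
      have "real p = (real p powr eps) powr (1/eps)" using e p0 by (simp add: powr_powr)
      also have "\<dots> \<le> 2 powr (1/eps)" using pp e p0 by (intro powr_mono2) auto
      also have "\<dots> \<le> real N" unfolding N_def by linarith
      finally show "p \<in> {..N}" by simp
    qed
    have "card {p. prime p \<and> p dvd n \<and> real p powr eps < 2} \<le> Suc N"
      using card_mono[OF _ sub] by simp
    then have "B ^ card {p. prime p \<and> p dvd n \<and> real p powr eps < 2} \<le> B ^ Suc N"
      using B1 by (intro power_increasing) auto
    then show ?thesis using dc_bound_aux[OF e n] unfolding B_def[symmetric]
      by (smt (verit) mult.commute mult_left_mono powr_ge_zero)
  qed
  then show ?thesis by blast
qed

definition roots :: "int \<Rightarrow> int \<Rightarrow> int set" where
  "roots D n = {r. 0 \<le> r \<and> r < n \<and> n dvd r^2 - D}"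

lemma card_le_blocks:
  fixes S :: "int set" and M h :: int
  assumes M: "M > 0" and h: "h \<ge> 0" and S: "S \<subseteq> {0..<M*h}"
    and c: "\<And>r r'. r \<in> S \<Longrightarrow> r' \<in> S \<Longrightarrow> M dvd r - r'"
  shows "card S \<le> nat h"
proof -
  have inj: "inj_on (\<lambda>r. r div M) S"
  proof (rule inj_onI)
    fix r r' assume r: "r \<in> S" "r' \<in> S" "r div M = r' div M"
    have "r mod M = r' mod M" using c[OF r(1,2)] by (simp add: mod_eq_dvd_iff)
    then show "r = r'" using r(3) by (metis div_mult_mod_eq)
  qed
  have "(\<lambda>r. r div M) ` S \<subseteq> {0..<h}"
  proof
    fix x assume "x \<in> (\<lambda>r. r div M) ` S"
    then obtain r where r: "r \<in> S" "x = r div M" by auto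
    have r0: "0 \<le> r" "r < M*h" using S r by auto
    have "M * (r div M) + r mod M = r" by (rule mult_div_mod_eq)
    moreover have "r mod M \<ge> 0" using M by simp
    ultimately have "M * (r div M) < M * h" using r0 by linarith
    then have "r div M < h" using M by (simp add: mult_less_cancel_left_pos)
    then show "x \<in> {0..<h}" using r r0 M by (auto simp: pos_imp_zdiv_nonneg_iff)
  qed
  then have "card ((\<lambda>r. r div M) ` S) \<le> card {0..<h}" by (intro card_mono) auto
  then show ?thesis using card_image[OF inj] h by simp
qed

lemma fiber_bound:
  fixes D n r0 d :: int
  assumes D: "D > 0" and n: "n > 0" and r0: "r0 \<in> roots D n" and d: "d > 0" "d dvd n"
  shows "real (card {r \<in> roots D n. gcd (r - r0) n = d}) \<le> 2 * sqrt (real_of_int D)"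
proof (cases "{r \<in> roots D n. gcd (r - r0) n = d} = {}")
  case True
  then show ?thesis using D by (subst True) simp
next
  case False
  define F where "F = {r \<in> roots D n. gcd (r - r0) n = d}"
  define e where "e = n div d"
  have ne: "n = d * e" using d by (simp add: e_def)
  have e0: "e > 0" using n d ne by (metis pos_imp_zdiv_pos_iff e_def zdvd_imp_le)
  define h where "h = gcd d e"
  define M where "M = lcm d e"
  have hM: "M * h = n" using prod_gcd_lcm_int[of d e] d e0 ne unfolding M_def h_def by (simp add: mult.commute)
  have M0: "M > 0" using d e0 unfolding M_def by (simp add: lcm_pos_int)
  have h0: "h > 0" using d unfolding h_def by simp
  have key: "d dvd r - r0 \<and> e dvd r + r0" if r: "r \<in> F" for r
  proof -
    have g: "gcd (r - r0) n = d" and rr: "n dvd r^2 - D" using r unfolding F_def roots_def by auto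
    have r0r: "n dvd r0^2 - D" using r0 unfolding roots_def by auto
    have dd: "d dvd r - r0" using g by (metis gcd_dvd1)
    then obtain a where a: "r - r0 = d * a" by blast
    have "gcd (d*a) (d*e) = d" using g a ne by simp
    then have "d * gcd a e = d" using d by (simp add: gcd_mult_left)
    then have cop: "coprime e a" using d by (simp add: coprime_iff_gcd_eq_1 gcd.commute)
    have "n dvd (r^2 - D) - (r0^2 - D)" using rr r0r by (rule dvd_diff)
    then have "d * e dvd (d * a) * (r + r0)" using ne a by (simp add: power2_eq_square algebra_simps)
    then have "e dvd a * (r + r0)" using d by (simp add: mult.assoc)
    then have "e dvd r + r0" using cop by (simp add: coprime_dvd_mult_right_iff)
    then show ?thesis using dd by simp
  qed
  have cong: "M dvd r - r'" if "r \<in> F" "r' \<in> F" for r r'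
  proof -
    have "d dvd (r - r0) - (r' - r0)" using key[OF that(1)] key[OF that(2)] by (meson dvd_diff)
    moreover have "e dvd (r + r0) - (r' + r0)" using key[OF that(1)] key[OF that(2)] by (meson dvd_diff)
    ultimately show ?thesis unfolding M_def by simp
  qed
  have cardF: "card F \<le> nat h"
    by (rule card_le_blocks[OF M0 _ _ cong]) (use h0 hM in \<open>auto simp: F_def roots_def\<close>)
  obtain r1 where r1: "r1 \<in> F" using False F_def by auto
  have "h dvd d" "h dvd e" unfolding h_def by auto
  then have h1: "h dvd r1 - r0" and h2: "h dvd r1 + r0" using key[OF r1] dvd_trans by blast+
  have "h dvd (r1 + r0) - (r1 - r0)" using h2 h1 by (rule dvd_diff)
  then have h2r: "h dvd 2 * r0" by simp
  have "h * h dvd d * e" using \<open>h dvd d\<close> \<open>h dvd e\<close> by (rule mult_dvd_mono)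
  then have "h^2 dvd n" using ne by (simp add: power2_eq_square)
  moreover have "n dvd r0^2 - D" using r0 unfolding roots_def by auto
  ultimately have "h^2 dvd r0^2 - D" by (rule dvd_trans)
  then have a1: "h^2 dvd 4 * (r0^2 - D)" by (rule dvd_mult)
  have "h^2 dvd (2*r0)^2" using h2r by (rule dvd_power_same)
  then have a2: "h^2 dvd 4 * r0^2" by (simp add: power_mult_distrib)
  have "h^2 dvd 4 * r0^2 - 4 * (r0^2 - D)" using a2 a1 by (meson dvd_diff)
  then have "h^2 dvd 4 * D" by simp
  then have "h^2 \<le> 4 * D" using D by (intro zdvd_imp_le) auto
  then have "real_of_int h ^2 \<le> 4 * real_of_int D" by (metis of_int_le_iff of_int_mult of_int_numeral of_int_power)
  then have "real_of_int h \<le> sqrt (4 * real_of_int D)" using h0 by (simp add: real_le_rsqrt)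
  also have "\<dots> = 2 * sqrt (real_of_int D)" by (simp add: real_sqrt_mult)
  finally have "real_of_int h \<le> 2 * sqrt (real_of_int D)" .
  moreover have "real (card F) \<le> real_of_int h" using cardF h0 by linarith
  ultimately show ?thesis unfolding F_def by linarith
qed

lemma dc_int:
  fixes n :: int assumes n: "n > 0"
  shows "card {d::int. d > 0 \<and> d dvd n} = dc (nat n)"
proof -
  have eq: "{d::int. d > 0 \<and> d dvd n} = int ` {d. d dvd nat n}"
  proof (rule set_eqI, rule iffI)
    fix d assume "d \<in> {d::int. d > 0 \<and> d dvd n}"
    then have d: "d > 0" "d dvd n" by auto
    then have "nat d dvd nat n" using n by (simp add: nat_dvd_iff)
    then show "d \<in> int ` {d. d dvd nat n}" using d by (auto intro!: image_eqI[of _ _ "nat d"])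
  next
    fix d assume "d \<in> int ` {d. d dvd nat n}"
    then obtain k where k: "k dvd nat n" "d = int k" by auto
    have "nat n \<noteq> 0" using n by simp
    have "k \<noteq> 0"
    proof
      assume "k = 0" then show False using k(1) \<open>nat n \<noteq> 0\<close> by simp
    qed
    moreover have "int k dvd n" using k n by (metis int_dvd_int_iff int_nat_eq less_le)
    ultimately show "d \<in> {d::int. d > 0 \<and> d dvd n}" using k by auto
  qed
  show ?thesis unfolding eq dc_def by (simp add: card_image)
qed

lemma roots_bound:
  fixes D n :: int
  assumes D: "D > 0" and n: "n > 0"
  shows "real (card (roots D n)) \<le> 2 * sqrt (real_of_int D) * real (dc (nat n))"
proof (cases "roots D n = {}")
  case True
  then show ?thesis using D by simp
next
  case False
  then obtain r0 where r0: "r0 \<in> roots D n" by auto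
  define Dv where "Dv = {d::int. d > 0 \<and> d dvd n}"
  have finS: "finite (roots D n)" unfolding roots_def by (rule finite_subset[of _ "{0..<n}"]) auto
  have finD: "finite Dv" unfolding Dv_def by (rule finite_subset[of _ "{0..n}"]) (use n in \<open>auto dest: zdvd_imp_le\<close>)
  have img: "(\<lambda>r. gcd (r - r0) n) ` roots D n \<subseteq> Dv" unfolding Dv_def using n by auto
  have "card (roots D n) = (\<Sum>d\<in>Dv. card {r \<in> roots D n. gcd (r - r0) n = d})"
    using sum.group[OF finS finD img, of "\<lambda>_. 1::nat"] by simp
  then have "real (card (roots D n)) = (\<Sum>d\<in>Dv. real (card {r \<in> roots D n. gcd (r - r0) n = d}))"
    by simp
  also have "\<dots> \<le> (\<Sum>d\<in>Dv. 2 * sqrt (real_of_int D))"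
    by (rule sum_mono) (use fiber_bound[OF D n r0] in \<open>auto simp: Dv_def\<close>)
  also have "\<dots> = 2 * sqrt (real_of_int D) * real (dc (nat n))"
    using dc_int[OF n] unfolding Dv_def by simp
  finally show ?thesis .
qed

lemma window_inj_aux:
  fixes Dl K u1 m1 u2 m2 :: int and L :: real
  assumes D: "Dl \<ge> 2" and K: "K \<noteq> 0"
    and s1: "u1 \<ge> 0" "m1 \<ge> 1" "u1^2 - Dl*m1^2 = K"
    and s2: "u2 \<ge> 0" "m2 \<ge> 1" "u2^2 - Dl*m2^2 = K"
    and dv: "K dvd u1*m2 - u2*m1"
    and w1: "L \<le> m1" and w2: "m2 < 6/5 * L" and le: "m1 \<le> m2"
  shows "m1 = m2"
proof -
  define x where "x = u1*m2 - u2*m1"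
  have x0: "x = 0"
  proof (rule ccontr)
    assume "x \<noteq> 0"
    then have "\<bar>K\<bar> \<le> \<bar>x\<bar>" using dv unfolding x_def by (simp add: dvd_imp_le_int)
    then have Kx: "\<bar>real_of_int K\<bar> \<le> \<bar>real_of_int x\<bar>" by linarith
    define t where "t = sqrt (real_of_int Dl)"
    have t2D: "t^2 = real_of_int Dl" unfolding t_def using D by simp
    have tge: "t \<ge> sqrt 2" unfolding t_def using D by simp
    have sq2: "sqrt 2 > ((6/5)::real)" by (rule real_less_rsqrt) (simp add: power2_eq_square)
    have t0: "t > 0" using tge sq2 by linarith
    define U1 where "U1 = real_of_int u1"
    define U2 where "U2 = real_of_int u2"
    define M1 where "M1 = real_of_int m1"
    define M2 where "M2 = real_of_int m2"
    define KK where "KK = real_of_int K"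
    define X where "X = real_of_int x"
    define V1 where "V1 = U1 + t*M1"
    define V2 where "V2 = U2 + t*M2"
    have e1: "U1^2 - t^2*M1^2 = KK" using s1(3) t2D unfolding U1_def M1_def KK_def
      by (metis of_int_diff of_int_mult of_int_power)
    have e2: "U2^2 - t^2*M2^2 = KK" using s2(3) t2D unfolding U2_def M2_def KK_def
      by (metis of_int_diff of_int_mult of_int_power)
    have Xd: "X = U1*M2 - U2*M1" unfolding X_def x_def U1_def U2_def M1_def M2_def by simp
    have pos: "U1 \<ge> 0" "U2 \<ge> 0" "M1 \<ge> 1" "M2 \<ge> 1" "M1 \<le> M2"
      using s1 s2 le unfolding U1_def U2_def M1_def M2_def by auto
    have V1p: "V1 > 0" using pos t0 unfolding V1_def by (simp add: add_nonneg_pos)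
    have "2*t*X*V1*V2 = (U1^2 - t^2*M1^2)*V2^2 - (U2^2 - t^2*M2^2)*V1^2"
      unfolding Xd V1_def V2_def by (simp add: algebra_simps power2_eq_square)
    then have iden: "2*t*X*V1*V2 = KK*(V2^2 - V1^2)" unfolding e1 e2 by (simp add: algebra_simps)
    have "M1^2 \<le> M2^2" using pos by (intro power_mono) auto
    then have "t^2*M1^2 \<le> t^2*M2^2" by (intro mult_left_mono) auto
    then have "U1^2 \<le> U2^2" using e1 e2 by linarith
    then have "U1 \<le> U2" using pos by (simp add: power2_le_iff_abs_le)
    then have V12: "V1 \<le> V2" unfolding V1_def V2_def using pos t0 mult_left_mono[of M1 M2 t] by linarith
    have m21: "M2 < (6/5) * M1" using w1 w2 unfolding M1_def M2_def by simp
    have V21: "V2 \<le> (12/5) * V1"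
    proof (cases "KK \<ge> 0")
      case True
      have "M2^2 \<le> ((6/5)*M1)^2" using m21 pos by (intro power_mono) auto
      then have "t^2*M2^2 \<le> t^2*((6/5)*M1)^2" by (intro mult_left_mono) auto
      then have "t^2*M2^2 \<le> (36/25)*(t^2*M1^2)" by (simp add: power_mult_distrib power2_eq_square)
      then have "U2^2 \<le> (36/25)*U1^2" using e1 e2 True by linarith
      then have "U2^2 \<le> ((6/5)*U1)^2" by (simp add: power_mult_distrib power2_eq_square)
      then have "U2 \<le> (6/5)*U1" by (rule power2_le_imp_le) (use pos in simp)
      moreover have "t*M2 \<le> t*((6/5)*M1)" using m21 t0 by (intro mult_left_mono) auto
      ultimately have "V2 \<le> (6/5) * V1" unfolding V1_def V2_def by (simp add: algebra_simps)
      then show ?thesis using V1p by linarith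
    next
      case False
      have "U2^2 \<le> (t*M2)^2" using e2 False by (simp add: power_mult_distrib)
      then have "U2 \<le> t*M2" by (rule power2_le_imp_le) (use pos t0 in simp)
      then have "V2 \<le> 2*(t*M2)" unfolding V2_def by linarith
      also have "\<dots> \<le> 2*(t*((6/5)*M1))" using m21 t0 by (intro mult_left_mono) auto
      also have "\<dots> = (12/5) * (t*M1)" by simp
      also have "\<dots> \<le> (12/5) * V1" unfolding V1_def using pos by simp
      finally show ?thesis .
    qed
    have "\<bar>2*t*X*V1*V2\<bar> = \<bar>KK\<bar> * (V2^2 - V1^2)" using iden V12 V1p
      by (simp add: abs_mult)
    also have "\<dots> \<le> \<bar>KK\<bar> * (V2 * V2)" by (intro mult_left_mono) (auto simp: power2_eq_square)
    also have "\<dots> \<le> \<bar>KK\<bar> * ((12/5)*V1 * V2)" using V21 V12 V1p by (intro mult_left_mono mult_right_mono) auto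
    finally have "(2*t*\<bar>X\<bar>) * (V1*V2) \<le> ((12/5)*\<bar>KK\<bar>) * (V1*V2)" using t0 V1p V12
      by (simp add: abs_mult algebra_simps)
    then have "2*t*\<bar>X\<bar> \<le> (12/5)*\<bar>KK\<bar>" using V1p V12 by (simp add: mult_le_cancel_right_pos)
    moreover have "2*t*\<bar>X\<bar> > (12/5)*\<bar>X\<bar>" using tge sq2 \<open>x \<noteq> 0\<close> unfolding X_def by simp
    ultimately show False using Kx unfolding KK_def X_def by linarith
  qed
  then have "u1*m2 = u2*m1" unfolding x_def by simp
  then have "u1^2*m2^2 = u2^2*m1^2" by (metis power_mult_distrib)
  then have "(K + Dl*m1^2)*m2^2 = (K + Dl*m2^2)*m1^2" using s1(3) s2(3) by (metis add.commute diff_add_cancel)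
  then have "K*m2^2 = K*m1^2" by (simp add: algebra_simps)
  then have "m2^2 = m1^2" using K by simp
  then show ?thesis using s1 s2 by (simp add: power2_eq_iff)
qed

lemma window_inj:
  fixes Dl K u1 m1 u2 m2 :: int and L :: real
  assumes D: "Dl \<ge> 2" and K: "K \<noteq> 0"
    and s1: "u1 \<ge> 0" "m1 \<ge> 1" "u1^2 - Dl*m1^2 = K"
    and s2: "u2 \<ge> 0" "m2 \<ge> 1" "u2^2 - Dl*m2^2 = K"
    and dv: "K dvd u1*m2 - u2*m1"
    and w1: "L \<le> m1" "m1 < 6/5 * L" and w2: "L \<le> m2" "m2 < 6/5 * L"
  shows "m1 = m2"
proof (cases "m1 \<le> m2")
  case True
  then show ?thesis using window_inj_aux[OF D K s1 s2 dv w1(1) w2(2)] by simp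
next
  case False
  have dv': "K dvd u2*m1 - u1*m2" using dv by (metis dvd_minus_iff minus_diff_eq)
  show ?thesis using window_inj_aux[OF D K s2 s1 dv' w2(1) w1(2)] False by simp
qed

definition cls :: "int \<Rightarrow> int \<Rightarrow> int \<Rightarrow> int \<times> int" where
  "cls K u m = (let g = gcd u m in
     (g, SOME r. 0 \<le> r \<and> r < \<bar>K div g^2\<bar> \<and> (K div g^2) dvd (u div g) - r * (m div g)))"

lemma cls_props:
  fixes Dl K u m :: int
  assumes K: "K \<noteq> 0" and s: "u \<ge> 0" "m \<ge> 1" "u^2 - Dl*m^2 = K"
  defines "g \<equiv> gcd u m"
  shows "g > 0" "g^2 dvd \<bar>K\<bar>" "u = g * (u div g)" "m = g * (m div g)"
    "(u div g)^2 - Dl*(m div g)^2 = K div g^2"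
    "K div g^2 \<noteq> 0" "\<bar>K div g^2\<bar> = \<bar>K\<bar> div g^2"
    "snd (cls K u m) \<in> roots Dl (\<bar>K\<bar> div g^2)"
    "(K div g^2) dvd (u div g) - snd (cls K u m) * (m div g)"
    "fst (cls K u m) = g"
proof -
  show g0: "g > 0" using s unfolding g_def by simp
  define u' where "u' = u div g"
  define m' where "m' = m div g"
  show uu: "u = g * (u div g)" unfolding g_def by simp
  show mm: "m = g * (m div g)" unfolding g_def by simp
  have "K = g^2 * (u'^2 - Dl*m'^2)" using s(3) uu mm unfolding u'_def m'_def
    by (metis (no_types, opaque_lifting) mult.left_commute power_mult_distrib right_diff_distrib)
  then have KK: "K = g^2 * (u'^2 - Dl*m'^2)" .
  define K' where "K' = K div g^2"
  have K'e: "K' = u'^2 - Dl*m'^2" unfolding K'_def using KK g0 by simp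
  then show "(u div g)^2 - Dl*(m div g)^2 = K div g^2" unfolding K'_def u'_def m'_def by simp
  show "g^2 dvd \<bar>K\<bar>" using KK by simp
  show K'0: "K div g^2 \<noteq> 0" using K KK K'e unfolding K'_def by auto
  show "\<bar>K div g^2\<bar> = \<bar>K\<bar> div g^2" using KK K'e g0 by (simp add: abs_mult)
  have cop: "coprime u' m'" unfolding u'_def m'_def g_def using s by (intro div_gcd_coprime) auto
  have cmK: "coprime m' K'"
  proof (rule coprimeI)
    fix c assume c: "c dvd m'" "c dvd K'"
    have "c dvd Dl*m'^2" using c(1) by (simp add: power2_eq_square)
    then have "c dvd K' + Dl*m'^2" using c(2) by (rule dvd_add[rotated])
    then have "c dvd u'^2" using K'e by simp
    moreover have "coprime m' (u'^2)" using cop by (simp add: coprime_commute)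
    ultimately show "is_unit c" using c(1) coprime_common_divisor by blast
  qed
  obtain a b where ab: "a * m' + b * K' = gcd m' K'" using bezout_int by blast
  then have ab1: "a * m' + b * K' = 1" using cmK by simp
  define r0 where "r0 = (u' * a) mod \<bar>K'\<bar>"
  have Kp: "\<bar>K'\<bar> > 0" using K'0 unfolding K'_def by simp
  have r0b: "0 \<le> r0" "r0 < \<bar>K'\<bar>" unfolding r0_def using Kp by auto
  have "\<bar>K'\<bar> dvd u' * a - r0" unfolding r0_def by (simp add: mod_eq_dvd_iff[symmetric] mod_mod_trivial)
  then have d1: "K' dvd u' * a - r0" by simp
  have "u' - r0 * m' = (u' * a - r0) * m' + u' * b * K'"
    using ab1 by (simp add: algebra_simps) (metis mult.commute mult.left_commute mult_1 ring_class.ring_distribs(1))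
  then have ex: "K' dvd u' - r0 * m'" using d1 by simp
  let ?P = "\<lambda>r. 0 \<le> r \<and> r < \<bar>K div g^2\<bar> \<and> (K div g^2) dvd (u div g) - r * (m div g)"
  have "?P r0" using r0b ex unfolding K'_def u'_def m'_def by simp
  then have Pr: "?P (snd (cls K u m))" unfolding cls_def g_def[symmetric] Let_def by simp (rule someI)
  show "fst (cls K u m) = g" unfolding cls_def g_def[symmetric] Let_def by simp
  define r where "r = snd (cls K u m)"
  have rd: "K' dvd u' - r * m'" using Pr unfolding r_def K'_def u'_def m'_def by simp
  then show "(K div g^2) dvd (u div g) - snd (cls K u m) * (m div g)" unfolding r_def K'_def u'_def m'_def .
  have eqP: "(r^2 - Dl) * m'^2 = (r*m' - u')*(r*m' + u') + K'" using K'e by (simp add: algebra_simps power2_eq_square)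
  have "K' dvd (r*m' - u')*(r*m' + u')" using rd by (metis dvd_minus_iff dvd_mult2 minus_diff_eq)
  then have "K' dvd (r*m' - u')*(r*m' + u') + K'" by (rule dvd_add) simp
  then have "K' dvd (r^2 - Dl) * m'^2" unfolding eqP .
  moreover have "coprime K' (m'^2)" using cmK by (simp add: coprime_commute)
  ultimately have "K' dvd r^2 - Dl" by (simp add: coprime_dvd_mult_left_iff)
  then have "\<bar>K'\<bar> dvd r^2 - Dl" by simp
  then show "snd (cls K u m) \<in> roots Dl (\<bar>K\<bar> div g^2)"
    using Pr \<open>\<bar>K div g^2\<bar> = \<bar>K\<bar> div g^2\<close> unfolding roots_def r_def K'_def by auto
qed

definition Ms :: "int \<Rightarrow> int \<Rightarrow> int set" where
  "Ms Dl K = {m::int. m \<ge> 1 \<and> (\<exists>u. u \<ge> 0 \<and> u^2 - Dl*m^2 = K)}"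

definition uof :: "int \<Rightarrow> int \<Rightarrow> int \<Rightarrow> int" where
  "uof Dl K m = (SOME u. u \<ge> 0 \<and> u^2 - Dl*m^2 = K)"

lemma uof: "m \<in> Ms Dl K \<Longrightarrow> uof Dl K m \<ge> 0 \<and> (uof Dl K m)^2 - Dl*m^2 = K"
  unfolding Ms_def uof_def by (rule someI_ex) auto

lemma dc_mono: "a dvd b \<Longrightarrow> b > 0 \<Longrightarrow> dc a \<le> dc b"
  unfolding dc_def by (intro card_mono) (auto intro: dvd_trans)

lemma div_ge1:
  fixes m g :: int assumes "m \<ge> 1" "g > 0" "m = g * (m div g)" shows "m div g \<ge> 1"
proof (rule ccontr)
  assume "\<not> m div g \<ge> 1"
  then have "m div g \<le> 0" by simp
  then have "g * (m div g) \<le> 0" using assms(2) by (simp add: mult_nonneg_nonpos)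
  then show False using assms by linarith
qed

lemma window_card:
  fixes Dl K :: int and L :: real and W :: "int set"
  assumes D: "Dl \<ge> 2" and K: "K \<noteq> 0" and W: "W \<subseteq> Ms Dl K"
    and wL: "\<And>m. m \<in> W \<Longrightarrow> L \<le> m \<and> m < 6/5 * L"
  shows "real (card W) \<le> 2 * sqrt (real_of_int Dl) * real (dc (nat \<bar>K\<bar>))^2"
proof -
  define n where "n = \<bar>K\<bar>"
  have n0: "n > 0" using K unfolding n_def by simp
  define f where "f = (\<lambda>m. cls K (uof Dl K m) m)"
  define G where "G = {g::int. g > 0 \<and> g^2 dvd n}"
  define T where "T = (SIGMA g:G. roots Dl (n div g^2))"
  have sol: "uof Dl K m \<ge> 0" "m \<ge> 1" "(uof Dl K m)^2 - Dl*m^2 = K" if "m \<in> W" for m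
  proof -
    have "m \<in> Ms Dl K" using W that by auto
    then show "uof Dl K m \<ge> 0" "m \<ge> 1" "(uof Dl K m)^2 - Dl*m^2 = K" using uof[of m Dl K] unfolding Ms_def by auto
  qed
  have inj: "inj_on f W"
  proof (rule inj_onI)
    fix m1 m2 assume m: "m1 \<in> W" "m2 \<in> W" "f m1 = f m2"
    let ?u1 = "uof Dl K m1" and ?u2 = "uof Dl K m2"
    note c1 = cls_props[OF K sol[OF m(1)]] and c2 = cls_props[OF K sol[OF m(2)]]
    define g where "g = gcd ?u1 m1"
    have gg: "gcd ?u2 m2 = g" using c1(10) c2(10) m(3) unfolding f_def g_def by simp
    have rr: "snd (cls K ?u2 m2) = snd (cls K ?u1 m1)" using m(3) unfolding f_def by simp
    define r where "r = snd (cls K ?u1 m1)"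
    define K' where "K' = K div g^2"
    have g0: "g > 0" using c1(1) unfolding g_def .
    have d1: "K' dvd ?u1 div g - r * (m1 div g)" using c1(9) unfolding K'_def r_def g_def .
    have d2: "K' dvd ?u2 div g - r * (m2 div g)" using c2(9) rr gg unfolding K'_def r_def by simp
    have "K' dvd (?u1 div g - r * (m1 div g)) * (m2 div g) - (?u2 div g - r * (m2 div g)) * (m1 div g)"
      using dvd_mult2[OF d1, of "m2 div g"] dvd_mult2[OF d2, of "m1 div g"] by (rule dvd_diff)
    then have dv: "K' dvd (?u1 div g) * (m2 div g) - (?u2 div g) * (m1 div g)"
      by (simp add: algebra_simps)
    have e1: "m1 = g * (m1 div g)" using c1(4) unfolding g_def .
    have e2: "m2 = g * (m2 div g)" using c2(4) gg by simp
    have pos1: "?u1 div g \<ge> 0" "m1 div g \<ge> 1" using sol[OF m(1)] g0 e1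
      by (auto simp: pos_imp_zdiv_nonneg_iff intro: div_ge1)
    have pos2: "?u2 div g \<ge> 0" "m2 div g \<ge> 1" using sol[OF m(2)] g0 e2
      by (auto simp: pos_imp_zdiv_nonneg_iff intro: div_ge1)
    have q1: "(?u1 div g)^2 - Dl*(m1 div g)^2 = K'" using c1(5) unfolding K'_def g_def .
    have q2: "(?u2 div g)^2 - Dl*(m2 div g)^2 = K'" using c2(5) gg unfolding K'_def by simp
    have K'0: "K' \<noteq> 0" using c1(6) unfolding K'_def g_def .
    have wl: "L / g \<le> real_of_int (m1 div g)" "real_of_int (m1 div g) < 6/5 * (L / g)"
             "L / g \<le> real_of_int (m2 div g)" "real_of_int (m2 div g) < 6/5 * (L / g)"
    proof -
      have gr: "real_of_int g > 0" using g0 by simp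
      have a1: "real_of_int m1 = g * real_of_int (m1 div g)" using e1 by (metis of_int_mult)
      have a2: "real_of_int m2 = g * real_of_int (m2 div g)" using e2 by (metis of_int_mult)
      show "L / g \<le> real_of_int (m1 div g)" using wL[OF m(1)] a1 gr by (simp add: divide_le_eq mult.commute)
      show "real_of_int (m1 div g) < 6/5 * (L / g)" using wL[OF m(1)] a1 gr by (simp add: less_divide_eq algebra_simps)
      show "L / g \<le> real_of_int (m2 div g)" using wL[OF m(2)] a2 gr by (simp add: divide_le_eq mult.commute)
      show "real_of_int (m2 div g) < 6/5 * (L / g)" using wL[OF m(2)] a2 gr by (simp add: less_divide_eq algebra_simps)
    qed
    have "m1 div g = m2 div g"
      by (rule window_inj[OF D K'0 pos1 q1 pos2 q2 dv wl])
    then show "m1 = m2" using e1 e2 by simp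
  qed
  have img: "f ` W \<subseteq> T"
  proof
    fix x assume "x \<in> f ` W"
    then obtain m where m: "m \<in> W" "x = f m" by auto
    note c = cls_props[OF K sol[OF m(1)]]
    have xe: "x = (gcd (uof Dl K m) m, snd (cls K (uof Dl K m) m))" using c(10) m(2) unfolding f_def
      by (metis prod.collapse)
    show "x \<in> T" unfolding T_def G_def xe n_def using c(1,2,8) by (intro SigmaI) auto
  qed
  have finG: "finite G" unfolding G_def
  proof (rule finite_subset[of _ "{0..n}"])
    show "{g::int. 0 < g \<and> g\<^sup>2 dvd n} \<subseteq> {0..n}"
    proof
      fix g assume "g \<in> {g::int. 0 < g \<and> g\<^sup>2 dvd n}"
      then have g: "g > 0" "g^2 dvd n" by auto
      then have "g dvd n" by (metis dvd_trans dvd_triv_left power2_eq_square)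
      then show "g \<in> {0..n}" using g n0 by (auto dest: zdvd_imp_le)
    qed
  qed simp
  have finT: "finite T" unfolding T_def using finG
    by (intro finite_SigmaI) (auto simp: roots_def intro: finite_subset[of _ "{0..<n div _}"])
  have "card W \<le> card T" by (rule card_inj_on_le[OF inj img finT])
  then have "real (card W) \<le> real (card T)" by simp
  also have "card T = (\<Sum>g\<in>G. card (roots Dl (n div g^2)))"
    unfolding T_def using finG by (intro card_SigmaI) (auto simp: roots_def intro: finite_subset[of _ "{0..<n div _}"])
  also have "real \<dots> = (\<Sum>g\<in>G. real (card (roots Dl (n div g^2))))" by simp
  also have "\<dots> \<le> (\<Sum>g\<in>G. 2 * sqrt (real_of_int Dl) * real (dc (nat n)))"
  proof (rule sum_mono)
    fix g assume "g \<in> G"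
    then have g: "g > 0" "g^2 dvd n" unfolding G_def by auto
    obtain k where k: "n = g^2 * k" using g(2) by (rule dvdE)
    have g2: "g^2 > 0" using g by simp
    have kk: "n div g^2 = k" using k g2 by simp
    have "k > 0" using k n0 g2 by (simp add: zero_less_mult_iff)
    then have q: "n div g^2 > 0" using kk by simp
    have "nat n = nat (g^2) * nat k" using k g2 \<open>k > 0\<close> by (simp add: nat_mult_distrib)
    then have "nat (n div g^2) dvd nat n" unfolding kk by simp
    then have "dc (nat (n div g^2)) \<le> dc (nat n)" using n0 by (intro dc_mono) auto
    then have sc: "2 * sqrt (real_of_int Dl) * real (dc (nat (n div g^2))) \<le> 2 * sqrt (real_of_int Dl) * real (dc (nat n))"
      using D by (intro mult_left_mono) auto
    have "real (card (roots Dl (n div g^2))) \<le> 2 * sqrt (real_of_int Dl) * real (dc (nat (n div g^2)))"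
      using roots_bound[of Dl "n div g^2"] D q by simp
    with sc show "real (card (roots Dl (n div g^2))) \<le> 2 * sqrt (real_of_int Dl) * real (dc (nat n))" by linarith
  qed
  also have "\<dots> = real (card G) * (2 * sqrt (real_of_int Dl) * real (dc (nat n)))" by simp
  also have "\<dots> \<le> real (dc (nat n)) * (2 * sqrt (real_of_int Dl) * real (dc (nat n)))"
  proof (intro mult_right_mono)
    have "G \<subseteq> {d::int. d > 0 \<and> d dvd n}"
    proof
      fix g assume "g \<in> G"
      then have g: "g > 0" "g^2 dvd n" unfolding G_def by auto
      have "g dvd g^2" by (simp add: power2_eq_square)
      then show "g \<in> {d::int. d > 0 \<and> d dvd n}" using g dvd_trans by blast
    qed
    then have "card G \<le> card {d::int. d > 0 \<and> d dvd n}"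
      using n0 by (intro card_mono) (auto intro!: finite_subset[of _ "{0..n}"] dest: zdvd_imp_le)
    then show "real (card G) \<le> real (dc (nat n))" using dc_int[OF n0] by simp
  qed (use D in simp)
  finally show ?thesis unfolding n_def by (simp add: power2_eq_square algebra_simps)
qed

lemma gap:
  fixes Dl K m1 m2 :: int
  assumes D: "Dl \<ge> 2" and K: "K \<noteq> 0" and m: "m1 \<in> Ms Dl K" "m2 \<in> Ms Dl K"
    and h1: "real_of_int m1 ^2 < sqrt \<bar>real_of_int K\<bar> / Dl"
    and h2: "real_of_int m2 ^2 < sqrt \<bar>real_of_int K\<bar> / Dl"
  shows "m1 = m2"
proof -
  have Dp: "real_of_int Dl > 0" using D by simp
  have K1: "\<bar>real_of_int K\<bar> \<ge> 1" using K by (simp add: abs_le_iff)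
  have sK: "sqrt \<bar>real_of_int K\<bar> \<le> \<bar>real_of_int K\<bar>" 
  proof -
    have "\<bar>real_of_int K\<bar> * 1 \<le> \<bar>real_of_int K\<bar> * \<bar>real_of_int K\<bar>" using K1 by (intro mult_left_mono) auto
    then have "\<bar>real_of_int K\<bar> \<le> \<bar>real_of_int K\<bar>^2" by (simp add: power2_eq_square)
    then show ?thesis by (simp add: real_sqrt_le_iff')
  qed
  have lower: "real_of_int m ^2 \<ge> sqrt \<bar>real_of_int K\<bar> / Dl" if mm: "m \<in> Ms Dl K" "K < 0" for m
  proof -
    obtain u where u: "u^2 - Dl*m^2 = K" using mm unfolding Ms_def by auto
    have "Dl * m^2 \<ge> - K" using u by (smt (verit) zero_le_power2)
    then have "real_of_int Dl * real_of_int m ^2 \<ge> \<bar>real_of_int K\<bar>" using mm(2)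
      by (metis abs_of_neg of_int_le_iff of_int_minus of_int_mult of_int_power of_int_less_0_iff)
    then have "real_of_int Dl * real_of_int m ^2 \<ge> sqrt \<bar>real_of_int K\<bar>" using sK by linarith
    then show ?thesis using Dp by (simp add: divide_le_eq mult.commute)
  qed
  show ?thesis
  proof (cases "K < 0")
    case True
    then show ?thesis using lower[OF m(1)] h1 by linarith
  next
    case False
    then have Kp: "K > 0" using K by simp
    have main: "a = b" if ab: "a \<in> Ms Dl K" "b \<in> Ms Dl K" "a \<le> b"
       and hb: "real_of_int b ^2 < sqrt \<bar>real_of_int K\<bar> / Dl" for a b
    proof (rule ccontr)
      assume "a \<noteq> b"
      then have ab': "a < b" using ab by simp
      obtain ua where ua: "ua \<ge> 0" "ua^2 - Dl*a^2 = K" using ab unfolding Ms_def by auto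
      obtain ub where ub: "ub \<ge> 0" "ub^2 - Dl*b^2 = K" using ab unfolding Ms_def by auto
      have a1: "a \<ge> 1" using ab unfolding Ms_def by auto
      have "a^2 < b^2" using ab' a1 by (intro power_strict_mono) auto
      then have "Dl*a^2 < Dl*b^2" using D by simp
      then have "ua^2 < ub^2" using ua ub by linarith
      then have uab: "ua < ub" using ua ub by (meson power_less_imp_less_base)
      have "ub^2 - ua^2 = (ub - ua)*(ub + ua)" by (simp add: power2_eq_square algebra_simps)
      also have "\<dots> \<ge> 1 * (ub + ua)" using uab ua ub by (intro mult_right_mono) auto
      finally have i1: "ub^2 - ua^2 \<ge> ub + ua" by simp
      have sq: "sqrt (real_of_int K) \<le> real_of_int x" if "x \<ge> 0" "x^2 - Dl*y^2 = K" for x y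
      proof -
        have "K \<le> x^2" using that D by (smt (verit) mult_nonneg_nonneg zero_le_power2)
        then have "real_of_int K \<le> real_of_int x ^2" by (metis of_int_le_iff of_int_power)
        then have "sqrt (real_of_int K) \<le> sqrt (real_of_int x ^2)" by (rule real_sqrt_le_mono)
        then show ?thesis using that(1) by simp
      qed
      have "real_of_int Dl * (real_of_int b^2 - real_of_int a^2) = real_of_int (ub^2 - ua^2)"
        using ua ub by (simp add: algebra_simps)
      also have "\<dots> \<ge> real_of_int ub + real_of_int ua" using i1 by (metis of_int_add of_int_le_iff)
      finally have "real_of_int Dl * (real_of_int b^2 - real_of_int a^2) \<ge> 2 * sqrt (real_of_int K)"
        using sq[OF ua] sq[OF ub] by linarith
      moreover have "real_of_int Dl * (real_of_int b^2 - real_of_int a^2) \<le> real_of_int Dl * real_of_int b^2"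
        using Dp by (intro mult_left_mono) auto
      moreover have "sqrt (real_of_int K) \<ge> 0" using Kp by simp
      moreover have "\<bar>real_of_int K\<bar> = real_of_int K" using Kp by simp
      ultimately have "real_of_int Dl * real_of_int b^2 \<ge> sqrt \<bar>real_of_int K\<bar>"
        by linarith
      then have "real_of_int b ^2 \<ge> sqrt \<bar>real_of_int K\<bar> / Dl" using Dp by (simp add: divide_le_eq mult.commute)
      then show False using hb by linarith
    qed
    show ?thesis
    proof (cases "m1 \<le> m2")
      case True then show ?thesis using main[OF m True h2] by simp
    next
      case False then show ?thesis using main[OF m(2,1) _ h1] by simp
    qed
  qed
qed

lemma geom_le:
  fixes q :: real assumes "0 \<le> q" "q < 1"
  shows "(\<Sum>j<N. q^j) \<le> 1 / (1 - q)"
proof -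
  have "(\<Sum>j<N. q^j) = (1 - q^N) / (1 - q)" using assms by (simp add: sum_gp_strict)
  also have "\<dots> \<le> 1 / (1 - q)" using assms by (intro divide_right_mono) auto
  finally show ?thesis .
qed

definition th :: real where "th = 6/5"

definition jf :: "int \<Rightarrow> nat" where "jf m = nat \<lfloor>log th (real_of_int m)\<rfloor>"

lemma jf_bounds:
  assumes "m \<ge> 1"
  shows "th ^ jf m \<le> real_of_int m" "real_of_int m < th ^ (jf m + 1)"
proof -
  have th1: "th > 1" by (simp add: th_def)
  define l where "l = log th (real_of_int m)"
  have l0: "l \<ge> 0" unfolding l_def using assms th1 by simp
  have ml: "real_of_int m = th powr l" unfolding l_def using assms th1 by simp
  have fl: "real (jf m) = of_int \<lfloor>l\<rfloor>" unfolding jf_def l_def[symmetric] using l0 by simp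
  have "th ^ jf m = th powr (real (jf m))" using th1 by (simp add: powr_realpow)
  also have "\<dots> \<le> th powr l" using th1 fl by (intro powr_mono) auto
  finally show "th ^ jf m \<le> real_of_int m" using ml by simp
  have "real_of_int m = th powr l" by (rule ml)
  also have "\<dots> < th powr (real (jf m + 1))" using th1 fl by (intro powr_less_mono) linarith+
  also have "\<dots> = th ^ (jf m + 1)" by (rule powr_realpow) (use th1 in simp)
  finally show "real_of_int m < th ^ (jf m + 1)" .
qed

lemma sum_Ms:
  fixes Dl K :: int and lam :: real and F :: "int set"
  assumes D: "Dl \<ge> 2" and K: "K \<noteq> 0" and lam: "lam > 0" and finF: "finite F" and FM: "F \<subseteq> Ms Dl K"
  defines "R \<equiv> 2 * sqrt (real_of_int Dl) * real (dc (nat \<bar>K\<bar>))^2"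
    and "H \<equiv> sqrt \<bar>real_of_int K\<bar> / Dl"
  shows "(\<Sum>m\<in>F. 1 / real_of_int m powr lam)
     \<le> 1 / (1 - th powr (-lam)) + th powr (lam/2) / (1 - th powr (-lam/2)) * R * H powr (-lam/4)"
proof -
  have th1: "th > 1" by (simp add: th_def)
  have Hp: "H > 0" unfolding H_def using K D by simp
  have R0: "R \<ge> 0" unfolding R_def using D by simp
  define q1 where "q1 = th powr (-lam)"
  define q2 where "q2 = th powr (-lam/2)"
  have q1b: "0 \<le> q1" "q1 < 1" unfolding q1_def using th1 lam by (auto intro: powr_less_one)
  have q2b: "0 \<le> q2" "q2 < 1" unfolding q2_def using th1 lam by (auto intro: powr_less_one)
  define s where "s = lam / 4"
  have s0: "s > 0" using lam by (simp add: s_def)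
  obtain N where N: "jf ` F \<subseteq> {..<N}" using finite_nat_bounded[of "jf ` F"] finF by auto
  define Fj where "Fj = (\<lambda>j. {m \<in> F. jf m = j})"
  have m1: "m \<ge> 1" if "m \<in> F" for m using FM that unfolding Ms_def by auto
  have cardb: "real (card (Fj j)) \<le> 1 + R * (th^(2*j+2) / H) powr s" for j
  proof (cases "th^(2*j+2) \<le> H")
    case True
    have "card (Fj j) \<le> Suc 0"
    proof (subst card_le_Suc0_iff_eq)
      show "finite (Fj j)" unfolding Fj_def using finF by simp
      show "\<forall>a1\<in>Fj j. \<forall>a2\<in>Fj j. a1 = a2"
      proof (intro ballI)
        fix a1 a2 assume a: "a1 \<in> Fj j" "a2 \<in> Fj j"
        have sq: "real_of_int a ^2 < H" if "a \<in> Fj j" for a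
        proof -
          have aF: "a \<in> F" "jf a = j" using that unfolding Fj_def by auto
          have "real_of_int a < th^(j+1)" using jf_bounds(2)[OF m1[OF aF(1)]] aF(2) by simp
          moreover have "real_of_int a \<ge> 0" using m1[OF aF(1)] by simp
          ultimately have "real_of_int a ^2 < (th^(j+1))^2" by (intro power_strict_mono) auto
          also have "\<dots> = th^(2*j+2)"
          proof -
            have e: "(j+1)*2 = 2*j+2" by simp
            show ?thesis by (metis e power_mult)
          qed
          finally show ?thesis using True by linarith
        qed
        have "a1 \<in> Ms Dl K" "a2 \<in> Ms Dl K" using a FM unfolding Fj_def by auto
        then show "a1 = a2" using gap[OF D K _ _ sq[OF a(1), unfolded H_def] sq[OF a(2), unfolded H_def]] by simp
      qed
    qed
    then have "real (card (Fj j)) \<le> 1" by simp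
    moreover have "R * (th^(2*j+2) / H) powr s \<ge> 0" using R0 by simp
    ultimately show ?thesis by linarith
  next
    case False
    have "real (card (Fj j)) \<le> R" unfolding R_def
    proof (rule window_card[OF D K, of _ "th^j"])
      show "Fj j \<subseteq> Ms Dl K" using FM unfolding Fj_def by auto
      fix m assume "m \<in> Fj j"
      then have mF: "m \<in> F" "jf m = j" unfolding Fj_def by auto
      show "th^j \<le> real_of_int m \<and> real_of_int m < 6/5 * th^j"
        using jf_bounds[OF m1[OF mF(1)]] mF(2) by (simp add: th_def)
    qed
    moreover have "(th^(2*j+2) / H) powr s \<ge> 1" using False Hp s0
      by (intro ge_one_powr_ge_zero) (auto simp: le_divide_eq)
    then have "R \<le> R * (th^(2*j+2) / H) powr s" using R0 by (metis mult_le_cancel_left1 mult.commute mult_left_mono mult_1 order.refl)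
    ultimately show ?thesis by linarith
  qed
  have fb: "1 / real_of_int m powr lam \<le> q1 ^ j" if "m \<in> Fj j" for m j
  proof -
    have mF: "m \<in> F" "jf m = j" using that unfolding Fj_def by auto
    have "th ^ j \<le> real_of_int m" using jf_bounds(1)[OF m1[OF mF(1)]] mF(2) by simp
    then have "(th ^ j) powr lam \<le> real_of_int m powr lam" using lam th1 by (intro powr_mono2) auto
    moreover have "(th ^ j) powr lam > 0" using th1 by simp
    moreover have "real_of_int m powr lam > 0" using m1[OF mF(1)] by simp
    ultimately have "1 / real_of_int m powr lam \<le> 1 / (th ^ j) powr lam"
      by (intro divide_left_mono) (auto intro: mult_pos_pos)
    also have "(th ^ j) powr lam = th powr (real j * lam)" using th1 by (simp add: powr_realpow[symmetric] powr_powr)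
    also have "1 / th powr (real j * lam) = th powr (real j * (-lam))" by (simp add: powr_minus divide_inverse)
    also have "\<dots> = q1 ^ j" unfolding q1_def by (rule powr_power[symmetric]) (use th1 in simp)
    finally show ?thesis .
  qed
  have "(\<Sum>m\<in>F. 1 / real_of_int m powr lam) = (\<Sum>j<N. \<Sum>m\<in>Fj j. 1 / real_of_int m powr lam)"
    unfolding Fj_def using sum.group[OF finF _ N, of "\<lambda>m. 1 / real_of_int m powr lam"] by simp
  also have "\<dots> \<le> (\<Sum>j<N. real (card (Fj j)) * q1 ^ j)"
    by (intro sum_mono sum_bounded_above) (use fb in auto)
  also have "\<dots> \<le> (\<Sum>j<N. (1 + R * (th^(2*j+2) / H) powr s) * q1 ^ j)"
    using q1b by (intro sum_mono mult_right_mono cardb) auto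
  also have "\<dots> = (\<Sum>j<N. q1 ^ j) + (th powr (lam/2) * R * H powr (-lam/4)) * (\<Sum>j<N. q2 ^ j)"
  proof -
    have "(th^(2*j+2) / H) powr s * q1 ^ j = th powr (lam/2) * H powr (-lam/4) * q2 ^ j" for j
    proof -
      have a0: "(th^(2*j+2) / H) powr s = (th^(2*j+2)) powr s / H powr s"
        by (rule powr_divide)
      have a1: "th^(2*j+2) = th powr (real (2*j+2))" by (rule powr_realpow[symmetric]) (use th1 in simp)
      have a2: "(th^(2*j+2)) powr s = th powr (real (2*j+2) * s)" unfolding a1 by (rule powr_powr)
      have "(th^(2*j+2) / H) powr s = th powr (real (2*j+2) * s) * H powr (-s)"
        unfolding a0 a2 by (simp add: powr_minus divide_inverse)
      moreover have "q1 ^ j = th powr (real j * (-lam))" unfolding q1_def by (rule powr_power) (use th1 in simp)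
      moreover have "q2 ^ j = th powr (real j * (-lam/2))" unfolding q2_def by (rule powr_power) (use th1 in simp)
      moreover have "th powr (real (2*j+2) * s) * th powr (real j * (-lam)) = th powr (lam/2) * th powr (real j * (-lam/2))"
        unfolding s_def by (simp add: powr_add[symmetric] algebra_simps)
      ultimately show ?thesis unfolding s_def by (simp add: algebra_simps)
    qed
    then have "(1 + R * (th^(2*j+2) / H) powr s) * q1 ^ j = q1 ^ j + (th powr (lam/2) * R * H powr (-lam/4)) * q2 ^ j" for j
      by (simp add: algebra_simps)
    then have "(\<Sum>j<N. (1 + R * (th^(2*j+2) / H) powr s) * q1 ^ j) = (\<Sum>j<N. q1 ^ j + (th powr (lam/2) * R * H powr (-lam/4)) * q2 ^ j)"
      by (intro sum.cong) auto
    then show ?thesis by (simp add: sum.distrib sum_distrib_left)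
  qed
  also have "\<dots> \<le> 1 / (1 - q1) + (th powr (lam/2) * R * H powr (-lam/4)) * (1 / (1 - q2))"
    using geom_le[OF q1b] geom_le[OF q2b] R0 by (intro add_mono mult_left_mono) auto
  finally show ?thesis unfolding q1_def q2_def by (simp add: algebra_simps)
qed

lemma sum_Ms_final:
  fixes lam :: real
  assumes lam: "lam > 0"
  shows "\<exists>C. C \<ge> 0 \<and> (\<forall>Dl K F. Dl \<ge> 2 \<longrightarrow> K \<noteq> 0 \<longrightarrow> finite F \<longrightarrow> F \<subseteq> Ms Dl K \<longrightarrow>
     (\<Sum>m\<in>F. 1 / real_of_int m powr lam) \<le> C * real_of_int Dl powr ((1 + lam)/2))"
proof -
  obtain Cd where Cd: "\<forall>n>0. real (dc n) \<le> Cd * real n powr (lam/16)" using dc_bound[of "lam/16"] lam by auto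
  have Cd0: "Cd \<ge> 0"
  proof -
    have "dc 1 = 1" unfolding dc_def by simp
    then show ?thesis using Cd[rule_format, of 1] by simp
  qed
  have th1: "th > 1" by (simp add: th_def)
  define A where "A = 1 / (1 - th powr (-lam))"
  define Bc where "Bc = th powr (lam/2) / (1 - th powr (-lam/2))"
  have A0: "A \<ge> 0" unfolding A_def using th1 lam by (simp add: powr_less_one less_imp_le)
  have Bc0: "Bc \<ge> 0" unfolding Bc_def using th1 lam by (simp add: powr_less_one less_imp_le)
  define C where "C = A + Bc * 2 * Cd^2"
  have C0: "C \<ge> 0" unfolding C_def using A0 Bc0 by simp
  show ?thesis
  proof (intro exI[of _ C] conjI allI impI C0)
    fix Dl K :: int and F :: "int set"
    assume D: "Dl \<ge> 2" and K: "K \<noteq> 0" and finF: "finite F" and FM: "F \<subseteq> Ms Dl K"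
    define n where "n = nat \<bar>K\<bar>"
    have n0: "n > 0" using K unfolding n_def by simp
    have rn: "real n = \<bar>real_of_int K\<bar>" unfolding n_def by simp
    define Dr where "Dr = real_of_int Dl"
    have Dr: "Dr \<ge> 2" unfolding Dr_def using D by simp
    define E where "E = Dr powr ((1 + lam)/2)"
    have E1: "E \<ge> 1" unfolding E_def using Dr lam by (intro ge_one_powr_ge_zero) auto
    have dc2: "real (dc n)^2 \<le> Cd^2 * real n powr (lam/8)"
    proof -
      have "real (dc n)^2 \<le> (Cd * real n powr (lam/16))^2"
        using Cd n0 by (intro power_mono) auto
      also have "\<dots> = Cd^2 * real n powr (lam/8)"
        by (simp add: power_mult_distrib powr_powr[symmetric] powr_realpow' power2_eq_square powr_add[symmetric])
      finally show ?thesis .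
    qed
    have Hpow: "(sqrt \<bar>real_of_int K\<bar> / Dl) powr (-lam/4) = real n powr (-lam/8) * Dr powr (lam/4)"
    proof -
      have e1: "(sqrt (real n) / Dr) powr (-lam/4) = sqrt (real n) powr (-lam/4) / Dr powr (-lam/4)"
        by (rule powr_divide)
      have e2: "sqrt (real n) powr (-lam/4) = real n powr (-lam/8)"
      proof -
        have "sqrt (real n) = real n powr (1/2)" by (simp add: powr_half_sqrt)
        then have "sqrt (real n) powr (-lam/4) = real n powr (1/2 * (-lam/4))" by (simp add: powr_powr)
        then show ?thesis by simp
      qed
      have e3: "Dr powr (-lam/4) = inverse (Dr powr (lam/4))" using powr_minus[of Dr "lam/4"] by simp
      have "(sqrt (real n) / Dr) powr (-lam/4) = real n powr (-lam/8) / inverse (Dr powr (lam/4))"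
        by (simp only: e1 e2 e3)
      also have "\<dots> = real n powr (-lam/8) * Dr powr (lam/4)" by (simp only: divide_inverse inverse_inverse_eq)
      finally have "(sqrt (real n) / Dr) powr (-lam/4) = real n powr (-lam/8) * Dr powr (lam/4)" .
      then show ?thesis unfolding rn[symmetric] Dr_def .
    qed
    have RH: "2 * sqrt Dr * real (dc n)^2 * (sqrt \<bar>real_of_int K\<bar> / Dl) powr (-lam/4) \<le> 2 * Cd^2 * E"
    proof -
      define P where "P = sqrt Dr * Dr powr (lam/4)"
      define Q where "Q = real (dc n)^2 * real n powr (-lam/8)"
      have t1: "2 * sqrt Dr * real (dc n)^2 * (sqrt \<bar>real_of_int K\<bar> / Dl) powr (-lam/4) = 2 * (P * Q)"
        unfolding Hpow P_def Q_def by (simp add: algebra_simps)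
      have "Q \<le> Cd^2 * real n powr (lam/8) * real n powr (-lam/8)"
        unfolding Q_def using dc2 by (intro mult_right_mono) auto
      also have "Cd^2 * real n powr (lam/8) * real n powr (-lam/8) = Cd^2"
        using n0 by (simp add: mult.assoc powr_add[symmetric])
      finally have Q1: "Q \<le> Cd^2" .
      have "sqrt Dr = Dr powr (1/2)" using Dr by (simp add: powr_half_sqrt)
      then have "P = Dr powr (1/2 + lam/4)" unfolding P_def by (simp add: powr_add)
      also have "\<dots> \<le> E" unfolding E_def using Dr lam by (intro powr_mono) auto
      finally have P1: "P \<le> E" .
      have "P * Q \<le> E * Cd^2" using P1 Q1 E1 by (intro mult_mono) (auto simp: P_def Q_def)
      then show ?thesis unfolding t1 by (simp add: algebra_simps)
    qed
    have "(\<Sum>m\<in>F. 1 / real_of_int m powr lam) \<le> A + Bc * (2 * sqrt Dr * real (dc n)^2) * (sqrt \<bar>real_of_int K\<bar> / Dl) powr (-lam/4)"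
      using sum_Ms[OF D K lam finF FM] unfolding A_def Bc_def Dr_def n_def by simp
    also have "\<dots> = A + Bc * (2 * sqrt Dr * real (dc n)^2 * (sqrt \<bar>real_of_int K\<bar> / Dl) powr (-lam/4))"
      by (simp add: algebra_simps)
    also have "\<dots> \<le> A * E + Bc * (2 * Cd^2 * E)"
      using RH E1 A0 Bc0 by (intro add_mono mult_left_mono) (auto simp: mult_le_cancel_left1)
    also have "\<dots> = C * Dr powr ((1 + lam)/2)" unfolding C_def E_def by (simp add: algebra_simps)
    finally show "(\<Sum>m\<in>F. 1 / real_of_int m powr lam) \<le> C * real_of_int Dl powr ((1 + lam)/2)"
      unfolding Dr_def .
  qed
qed

lemma nosq:
  fixes D m u :: int
  assumes m: "m \<noteq> 0" and e: "D * m^2 = u^2"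
  shows "\<exists>r. D = r^2"
proof -
  define g where "g = gcd u m"
  have g0: "g \<noteq> 0" using m unfolding g_def by simp
  define u' where "u' = u div g"
  define m' where "m' = m div g"
  have uu: "u = g * u'" "m = g * m'" unfolding u'_def m'_def g_def by auto
  have cop: "coprime u' m'" unfolding u'_def m'_def g_def using m by (intro div_gcd_coprime) auto
  have "g^2 * (D * m'^2) = g^2 * u'^2" using e uu by (simp add: power_mult_distrib algebra_simps)
  then have e': "D * m'^2 = u'^2" using g0 by simp
  have "m'^2 dvd u'^2" using e' by (metis dvd_triv_right)
  moreover have "coprime (m'^2) (u'^2)" using cop by (simp add: coprime_commute)
  ultimately have "is_unit (m'^2)" by (metis coprime_common_divisor dvd_refl)
  then have "m'^2 = 1" by simp
  then show ?thesis using e' by auto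
qed

theorem mainTheorem7:
  fixes lam :: real
  assumes "lam > 0"
  shows "\<exists>C::real. \<forall>a b c k :: int.
           b^2 - 4*a*c > 0 \<and> \<not> (\<exists>r::int. b^2 - 4*a*c = r^2) \<longrightarrow>
           (let A = {(m::int, n::int). m \<noteq> 0 \<and> a*m^2 + b*m*n + c*n^2 = k}
            in (\<lambda>(m, n). 1 / \<bar>real_of_int m\<bar> powr lam) summable_on A \<and>
               (\<Sum>\<^sub>\<infinity>(m, n)\<in>A. 1 / \<bar>real_of_int m\<bar> powr lam)
                 \<le> C * real_of_int (b^2 - 4*a*c) powr ((1 + lam) / 2))"
proof -
  obtain C where C0: "C \<ge> 0" and CB: "\<And>Dl K F. Dl \<ge> 2 \<Longrightarrow> K \<noteq> 0 \<Longrightarrow> finite F \<Longrightarrow> F \<subseteq> Ms Dl K \<Longrightarrow>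
     (\<Sum>m\<in>F. 1 / real_of_int m powr lam) \<le> C * real_of_int Dl powr ((1 + lam)/2)"
    using sum_Ms_final[OF assms] by blast
  show ?thesis
  proof (intro exI[of _ "4*C"] allI impI, unfold Let_def)
    fix a b c k :: int
    assume h: "b^2 - 4*a*c > 0 \<and> \<not> (\<exists>r::int. b^2 - 4*a*c = r^2)"
    define Dl where "Dl = b^2 - 4*a*c"
    define A where "A = {(m::int, n::int). m \<noteq> 0 \<and> a*m^2 + b*m*n + c*n^2 = k}"
    define f where "f = (\<lambda>(m::int, n::int). 1 / \<bar>real_of_int m\<bar> powr lam)"
    have Dp: "Dl > 0" and nsq: "\<not> (\<exists>r. Dl = r^2)" using h unfolding Dl_def by auto
    have D2: "Dl \<ge> 2"
    proof (rule ccontr)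
      assume "\<not> Dl \<ge> 2" then have "Dl = 1" using Dp by simp
      then have "Dl = 1^2" by simp
      then show False using nsq by blast
    qed
    have c0: "c \<noteq> 0"
    proof
      assume "c = 0" then have "Dl = b^2" unfolding Dl_def by simp
      then show False using nsq by blast
    qed
    define K where "K = 4*c*k"
    have iden: "(2*c*n + b*m)^2 - Dl*m^2 = 4*c*(a*m^2 + b*m*n + c*n^2)" for m n
      unfolding Dl_def by (simp add: power2_eq_square algebra_simps)
    have f0: "f x \<ge> 0" for x unfolding f_def by (auto split: prod.splits)
    have E0: "real_of_int Dl powr ((1 + lam)/2) \<ge> 0" by simp
    have bound: "sum f F \<le> 4*C * real_of_int Dl powr ((1 + lam)/2)" if F: "finite F" "F \<subseteq> A" for F
    proof (cases "k = 0")
      case True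
      have "A = {}"
      proof (rule ccontr)
        assume "A \<noteq> {}"
        then obtain m n where mn: "m \<noteq> 0" "a*m^2 + b*m*n + c*n^2 = 0" using True unfolding A_def by auto
        have "Dl*m^2 = (2*c*n + b*m)^2" using iden[of n m] mn by simp
        then show False using nosq[OF mn(1)] nsq by blast
      qed
      then have "F = {}" using F by auto
      then show ?thesis using C0 E0 by simp
    next
      case False
      have K0: "K \<noteq> 0" unfolding K_def using False c0 by simp
      define g where "g = (\<lambda>x::int\<times>int. \<bar>fst x\<bar>)"
      have gM: "g x \<in> Ms Dl K" if "x \<in> A" for x
      proof -
        obtain m n where x0: "x = (m,n)" by (cases x)
        then have x: "x = (m,n)" "m \<noteq> 0" "a*m^2 + b*m*n + c*n^2 = k" using that unfolding A_def by auto
        have "\<bar>2*c*n + b*m\<bar>^2 - Dl*\<bar>m\<bar>^2 = K" using iden[of n m] x unfolding K_def by simp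
        moreover have "\<bar>m\<bar> \<ge> 1" using x(2) by simp
        ultimately show ?thesis unfolding Ms_def g_def using x(1)
          by (intro CollectI conjI exI[of _ "\<bar>2*c*n + b*m\<bar>"]) auto
      qed
      have finG: "finite (g ` F)" using F by simp
      have "sum f F = (\<Sum>M\<in>g ` F. sum f {x \<in> F. g x = M})"
        using sum.group[OF F(1) finG subset_refl, of f] by simp
      also have "\<dots> \<le> (\<Sum>M\<in>g ` F. 4 * (1 / real_of_int M powr lam))"
      proof (rule sum_mono)
        fix M assume "M \<in> g ` F"
        then have MM: "M \<in> Ms Dl K" using gM F by auto
        define w where "w = uof Dl K M"
        have w: "w \<ge> 0" "w^2 - Dl*M^2 = K" using uof[OF MM] unfolding w_def by auto
        have M1: "M \<ge> 1" using MM unfolding Ms_def by auto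
        define Fb where "Fb = {x \<in> F. g x = M}"
        have fv: "f x = 1 / real_of_int M powr lam" if "x \<in> Fb" for x
          using that unfolding Fb_def f_def g_def by (auto split: prod.splits)
        define phi where "phi = (\<lambda>x::int\<times>int. (fst x, 2*c*(snd x) + b*fst x))"
        have inj: "inj_on phi Fb"
        proof (rule inj_onI)
          fix x y assume "x \<in> Fb" "y \<in> Fb" "phi x = phi y"
          then have "fst x = fst y" "2*c*(snd x) = 2*c*(snd y)" unfolding phi_def by auto
          then show "x = y" using c0 by (simp add: prod_eq_iff)
        qed
        have img: "phi ` Fb \<subseteq> {M, -M} \<times> {w, -w}"
        proof
          fix y assume "y \<in> phi ` Fb"
          then obtain m n where mn: "(m,n) \<in> Fb" "y = phi (m,n)" by auto
          then have mA: "(m,n) \<in> A" "\<bar>m\<bar> = M" using F unfolding Fb_def g_def by auto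
          then have q: "a*m^2 + b*m*n + c*n^2 = k" unfolding A_def by auto
          have "(2*c*n + b*m)^2 = Dl*m^2 + K" using iden[of n m] q unfolding K_def by simp
          also have "m^2 = M^2" using mA(2) by (metis power2_abs)
          also have "Dl*M^2 + K = w^2" using w by simp
          finally have "(2*c*n + b*m)^2 = w^2" .
          then have "2*c*n + b*m = w \<or> 2*c*n + b*m = -w" by (simp add: power2_eq_iff)
          moreover have "m = M \<or> m = -M" using mA(2) by auto
          ultimately show "y \<in> {M, -M} \<times> {w, -w}" using mn(2) unfolding phi_def by auto
        qed
        have "card Fb \<le> card ({M, -M} \<times> {w, -w})" by (rule card_inj_on_le[OF inj img]) simp
        also have "\<dots> \<le> 4"
        proof -
          have "card {M, -M} \<le> 2" "card {w, -w} \<le> 2" by (auto simp: card_insert_if)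
          then have "card {M, -M} * card {w, -w} \<le> 2 * 2" by (intro mult_le_mono)
          moreover have "card ({M, -M} \<times> {w, -w}) = card {M, -M} * card {w, -w}" by (rule card_cartesian_product)
          ultimately show ?thesis by linarith
        qed
        finally have cF: "card Fb \<le> 4" .
        have "sum f Fb = real (card Fb) * (1 / real_of_int M powr lam)" using fv by simp
        also have "\<dots> \<le> 4 * (1 / real_of_int M powr lam)" using cF by (intro mult_right_mono) auto
        finally show "sum f {x \<in> F. g x = M} \<le> 4 * (1 / real_of_int M powr lam)" unfolding Fb_def .
      qed
      also have "\<dots> = 4 * (\<Sum>M\<in>g ` F. 1 / real_of_int M powr lam)" by (simp add: sum_distrib_left)
      also have "\<dots> \<le> 4 * (C * real_of_int Dl powr ((1 + lam)/2))"
      proof -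
        have "g ` F \<subseteq> Ms Dl K" using gM F by blast
        then show ?thesis using CB[OF D2 K0 finG] by simp
      qed
      finally show ?thesis by simp
    qed
    have summ: "f summable_on A"
    proof (rule nonneg_bdd_above_summable_on)
      show "\<And>x. x \<in> A \<Longrightarrow> 0 \<le> f x" using f0 by simp
      show "bdd_above (sum f ` {F. F \<subseteq> A \<and> finite F})"
        using bound by (intro bdd_aboveI[of _ "4*C * real_of_int Dl powr ((1 + lam)/2)"]) auto
    qed
    have "infsum f A \<le> 4*C * real_of_int Dl powr ((1 + lam)/2)"
      by (rule infsum_le_finite_sums[OF summ]) (use bound in auto)
    then show "(\<lambda>(m, n). 1 / \<bar>real_of_int m\<bar> powr lam) summable_on {(m::int, n::int). m \<noteq> 0 \<and> a*m^2 + b*m*n + c*n^2 = k} \<and>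
               (\<Sum>\<^sub>\<infinity>(m, n)\<in>{(m::int, n::int). m \<noteq> 0 \<and> a*m^2 + b*m*n + c*n^2 = k}. 1 / \<bar>real_of_int m\<bar> powr lam)
                 \<le> 4*C * real_of_int (b^2 - 4*a*c) powr ((1 + lam) / 2)"
      using summ unfolding f_def A_def Dl_def by simp
  qed
qed

end
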